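(* Let $n\geq1$ and, on the second jet space $J^2(n,1)$ with coordinates $(x^i,u,u_i,u_{ij})$, let $U=(u_{ij})$ be the (symmetric) matrix of second-order coordinates and $U_k$ its upper-left $k\times k$ submatrix. Then the second-order PDEs $\{\det U_k=0\}$, $k=1,\dots,n$, are all locally contactomorphic to each other, i.e. for any $k,l$ there is a local contact transformation of $J^1(n,1)$ whose prolongation to $J^2(n,1)$ maps $\{\det U_k=0\}$ onto $\{\det U_l=0\}$. (In particular, for $n=2$, $u_{11}u_{22}-u_{12}^2=0$ and $u_{11}=0$ are contactomorphic.)
   Context: $J^1(n,1)$ has coordinates $(x^i,u,u_i)$ and contact distribution $\ker(du-u_idx^i)$; $J^2(n,1)$ is identified (locally) with the bundle of Lagrangian planes of this contact distribution, the point $(x^i,u,u_i,u_{ij})$ corresponding to the plane $\langle \partial_{x^i}+u_i\partial_u+u_{ij}\partial_{u_j}\rangle$. A contact transformation $\phi$ prolongs to $J^2(n,1)$ by $L\mapsto d\phi(L)$. *)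

theory Defs
  imports "HOL-Analysis.Analysis"
begin

type_synonym 'n jet1 = "(real^'n) \<times> real \<times> (real^'n)"
type_synonym 'n jet2 = "'n jet1 \<times> ((real, 'n) vec, 'n) vec"

fun higher_differentiable_on ::
  "'a::real_normed_vector set \<Rightarrow> ('a \<Rightarrow> 'b::real_normed_vector) \<Rightarrow> nat \<Rightarrow> bool" where
  "higher_differentiable_on S f 0 = continuous_on S f"
| "higher_differentiable_on S f (Suc k) =
     (f differentiable_on S \<and>
      (\<forall>v. higher_differentiable_on S (\<lambda>x. frechet_derivative f (at x) v) k))"

definition smooth_on :: "'a::real_normed_vector set \<Rightarrow> ('a \<Rightarrow> 'b::real_normed_vector) \<Rightarrow> bool" where
  "smooth_on S f \<longleftrightarrow> (\<forall>k. higher_differentiable_on S f k)"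

definition contact_plane :: "'n::finite jet1 \<Rightarrow> 'n jet1 set" where
  "contact_plane w = (case w of (x, u, p) \<Rightarrow> {(dx, du, dp). du = p \<bullet> dx})"

definition local_contact_transformation :: "('n::finite jet1 \<Rightarrow> 'n jet1) \<Rightarrow> 'n jet1 set \<Rightarrow> bool" where
  "local_contact_transformation \<phi> W \<longleftrightarrow>
     open W \<and> open (\<phi> ` W) \<and> smooth_on W \<phi> \<and>
     (\<exists>\<psi>. smooth_on (\<phi> ` W) \<psi> \<and> (\<forall>w\<in>W. \<psi> (\<phi> w) = w) \<and> (\<forall>z\<in>\<phi> ` W. \<phi> (\<psi> z) = z)) \<and>
     (\<forall>w\<in>W. \<forall>v\<in>contact_plane w. frechet_derivative \<phi> (at w) v \<in> contact_plane (\<phi> w))"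

text \<open>The Lagrangian plane spanned by the vectors d/dx_i + p_i d/du + sum_j U_ij d/dp_j.\<close>
definition lagr_plane :: "real^'n \<Rightarrow> real^'n^'n \<Rightarrow> 'n::finite jet1 set" where
  "lagr_plane p U = {(dx, p \<bullet> dx, U *v dx) | dx. True}"

definition J2 :: "'n::finite jet2 set" where
  "J2 = {(w, U). transpose U = U}"

definition prolongs :: "('n::finite jet1 \<Rightarrow> 'n jet1) \<Rightarrow> 'n jet2 \<Rightarrow> 'n jet2 \<Rightarrow> bool" where
  "prolongs \<phi> a b \<longleftrightarrow>
     (case a of ((x, u, p), U) \<Rightarrow> case b of ((x', u', p'), U') \<Rightarrow>
        (x', u', p') = \<phi> (x, u, p) \<and> transpose U' = U' \<and>
        frechet_derivative \<phi> (at (x, u, p)) ` lagr_plane p U = lagr_plane p' U')"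

text \<open>The first k indices (w.r.t. the order of the index type), and det U_k (Leibniz formula).\<close>
definition lead :: "nat \<Rightarrow> 'n::{finite,wellorder} set" where
  "lead k = {i. card {j. j < i} < k}"

definition det_lead :: "nat \<Rightarrow> ((real, 'n::{finite,wellorder}) vec, 'n) vec \<Rightarrow> real" where
  "det_lead k U = (\<Sum>\<pi> | \<pi> permutes (lead k :: 'n set).
       of_int (sign \<pi>) * (\<Prod>i\<in>lead k. U $ i $ \<pi> i))"

end

theory Submission
  imports Defs
begin

lemma hd_Suc_intro:
  fixes f :: "'a::real_normed_vector \<Rightarrow> 'b::real_normed_vector"
  assumes "\<And>x. (f has_derivative D x) (at x)" "\<And>v. higher_differentiable_on UNIV (\<lambda>x. D x v) k"
  shows "higher_differentiable_on UNIV f (Suc k)"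
proof -
  have fd: "frechet_derivative f (at x) = D x" for x using assms(1) frechet_derivative_at by metis
  have "f differentiable_on UNIV"
    using assms(1) differentiable_def differentiable_at_imp_differentiable_on by blast
  then show ?thesis using assms(2) by (simp add: fd)
qed

lemma hd_const: "higher_differentiable_on (UNIV::'a::real_normed_vector set) (\<lambda>x. c::'b::real_normed_vector) k"
proof (induction k arbitrary: c)
  case 0 then show ?case by simp
next
  case (Suc k)
  show ?case by (rule hd_Suc_intro[where D="\<lambda>x v. 0"]) (auto intro: Suc.IH)
qed

lemma hd_affine:
  fixes g :: "'a::real_normed_vector \<Rightarrow> 'b::real_normed_vector"
  assumes "bounded_linear g"
  shows "higher_differentiable_on UNIV (\<lambda>x. c + g x) k"
proof (cases k)
  case 0 then show ?thesis using assms
    by (simp add: linear_continuous_on continuous_on_add)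
next
  case (Suc k)
  show ?thesis unfolding Suc
  proof (rule hd_Suc_intro[where D="\<lambda>x h. 0 + g h"])
    fix x show "((\<lambda>x. c + g x) has_derivative (\<lambda>h. 0 + g h)) (at x)"
      by (intro has_derivative_add has_derivative_const bounded_linear_imp_has_derivative assms)
  qed (rule hd_const)
qed

lemma smooth_quad:
  fixes g :: "'a::real_normed_vector \<Rightarrow> 'a"
  assumes g: "bounded_linear g" and B: "bounded_bilinear B"
    and f: "\<And>w. f w = g w + B w w"
  shows "smooth_on UNIV f"
    and "(f has_derivative (\<lambda>v. g v + (B w v + B v w))) (at w)"
proof -
  have der: "(f has_derivative (\<lambda>v. g v + (B w v + B v w))) (at w)" for w
  proof -
    have "((\<lambda>w. g w + B w w) has_derivative (\<lambda>v. g v + (B w v + B v w))) (at w)"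
      by (intro has_derivative_add bounded_linear.has_derivative[OF g]
          bounded_bilinear.FDERIV[OF B] has_derivative_ident)
    moreover have "f = (\<lambda>w. g w + B w w)" using f by auto
    ultimately show ?thesis by simp
  qed
  then show "(f has_derivative (\<lambda>v. g v + (B w v + B v w))) (at w)" .
  show "smooth_on UNIV f" unfolding smooth_on_def
  proof
    fix k show "higher_differentiable_on UNIV f k"
    proof (cases k)
      case 0
      have "isCont f x" for x using der[of x] by (rule has_derivative_continuous)
      then show ?thesis using 0
        by (simp add: continuous_at_imp_continuous_on)
    next
      case (Suc k)
      show ?thesis unfolding Suc
      proof (rule hd_Suc_intro[OF der])
        fix v
        have "bounded_linear (\<lambda>w. B w v + B v w)"
          by (intro bounded_linear_add bounded_bilinear.bounded_linear_left[OF B]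
              bounded_bilinear.bounded_linear_right[OF B])
        then show "higher_differentiable_on UNIV (\<lambda>w. g v + (B w v + B v w)) k"
          by (rule hd_affine)
      qed
    qed
  qed
qed

definition sel :: "'n::finite set \<Rightarrow> real^'n \<Rightarrow> real^'n \<Rightarrow> real^'n" where
  "sel I a b = (\<chi> i. if i \<in> I then a$i else b$i)"

lemma sel_nth[simp]: "sel I a b $ i = (if i \<in> I then a$i else b$i)"
  by (simp add: sel_def)

definition phiI :: "'n::finite set \<Rightarrow> 'n jet1 \<Rightarrow> 'n jet1" where
  "phiI I w = (sel I (snd (snd w)) (fst w), fst (snd w) - (\<Sum>i\<in>I. fst w $ i * snd (snd w) $ i),
     sel I (- fst w) (snd (snd w)))"
definition psiI :: "'n::finite set \<Rightarrow> 'n jet1 \<Rightarrow> 'n jet1" where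
  "psiI I w = (sel I (- snd (snd w)) (fst w), fst (snd w) - (\<Sum>i\<in>I. snd (snd w) $ i * fst w $ i),
     sel I (fst w) (snd (snd w)))"
definition gphi :: "'n::finite set \<Rightarrow> 'n jet1 \<Rightarrow> 'n jet1" where
  "gphi I w = (sel I (snd (snd w)) (fst w), fst (snd w), sel I (- fst w) (snd (snd w)))"
definition gpsi :: "'n::finite set \<Rightarrow> 'n jet1 \<Rightarrow> 'n jet1" where
  "gpsi I w = (sel I (- snd (snd w)) (fst w), fst (snd w), sel I (fst w) (snd (snd w)))"
definition Bphi :: "'n::finite set \<Rightarrow> 'n jet1 \<Rightarrow> 'n jet1 \<Rightarrow> 'n jet1" where
  "Bphi I w z = (0, - (\<Sum>i\<in>I. fst w $ i * snd (snd z) $ i), 0)"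
definition Bpsi :: "'n::finite set \<Rightarrow> 'n jet1 \<Rightarrow> 'n jet1 \<Rightarrow> 'n jet1" where
  "Bpsi I w z = (0, - (\<Sum>i\<in>I. snd (snd w) $ i * fst z $ i), 0)"

lemma lin_gphi: "bounded_linear (gphi I)"
  unfolding linear_conv_bounded_linear[symmetric]
  by (rule linearI) (auto simp: gphi_def vec_eq_iff algebra_simps)

lemma lin_gpsi: "bounded_linear (gpsi I)"
  unfolding linear_conv_bounded_linear[symmetric]
  by (rule linearI) (auto simp: gpsi_def vec_eq_iff algebra_simps)

lemma bil_Bphi: "bounded_bilinear (Bphi I)"
  unfolding bilinear_conv_bounded_bilinear[symmetric] bilinear_def
  by (auto intro!: linearI simp: Bphi_def algebra_simps sum.distrib sum_distrib_left)

lemma bil_Bpsi: "bounded_bilinear (Bpsi I)"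
  unfolding bilinear_conv_bounded_bilinear[symmetric] bilinear_def
  by (auto intro!: linearI simp: Bpsi_def algebra_simps sum.distrib sum_distrib_left)

lemma phi_eq: "phiI I w = gphi I w + Bphi I w w"
  by (simp add: phiI_def gphi_def Bphi_def)
lemma psi_eq: "psiI I w = gpsi I w + Bpsi I w w"
  by (simp add: psiI_def gpsi_def Bpsi_def)

lemma smooth_phi: "smooth_on UNIV (phiI I)"
  by (rule smooth_quad(1)[OF lin_gphi bil_Bphi phi_eq])
lemma smooth_psi: "smooth_on UNIV (psiI I)"
  by (rule smooth_quad(1)[OF lin_gpsi bil_Bpsi psi_eq])

definition dphi :: "'n::finite set \<Rightarrow> 'n jet1 \<Rightarrow> 'n jet1 \<Rightarrow> 'n jet1" where
  "dphi I w v = (sel I (snd (snd v)) (fst v),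
     fst (snd v) - (\<Sum>i\<in>I. fst w $ i * snd (snd v) $ i + fst v $ i * snd (snd w) $ i),
     sel I (- fst v) (snd (snd v)))"

lemma fd_phi: "frechet_derivative (phiI I) (at w) = dphi I w"
proof -
  have "(phiI I has_derivative (\<lambda>v. gphi I v + (Bphi I w v + Bphi I v w))) (at w)"
    by (rule smooth_quad(2)[OF lin_gphi bil_Bphi phi_eq])
  moreover have "(\<lambda>v. gphi I v + (Bphi I w v + Bphi I v w)) = dphi I w"
    by (auto simp: fun_eq_iff dphi_def gphi_def Bphi_def sum.distrib)
  ultimately show ?thesis using frechet_derivative_at by metis
qed

lemma psi_phi: "psiI I (phiI I w) = w"
  by (auto simp: psiI_def phiI_def vec_eq_iff sum_negf prod_eq_iff)
lemma phi_psi: "phiI I (psiI I w) = w"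
  by (auto simp: psiI_def phiI_def vec_eq_iff sum_negf prod_eq_iff)

lemma contact_plane_iff: "v \<in> contact_plane w \<longleftrightarrow> fst (snd v) = snd (snd w) \<bullet> fst v"
  by (cases w; cases v) (auto simp: contact_plane_def)

lemma sum_split_UNIV:
  fixes f :: "'n::finite \<Rightarrow> real"
  shows "sum f UNIV = sum f I + sum f (- I)"
proof -
  have "sum f (I \<union> - I) = sum f I + sum f (- I)"
    by (rule sum.union_disjoint) auto
  then show ?thesis by simp
qed

lemma sum_if_UNIV:
  fixes a b :: "'n::finite \<Rightarrow> real"
  shows "(\<Sum>i\<in>UNIV. if i \<in> I then a i else b i) = sum a I + sum b (- I)"
proof -
  have "(\<Sum>i\<in>UNIV. if i \<in> I then a i else b i) = (\<Sum>i\<in>I. if i \<in> I then a i else b i) + (\<Sum>i\<in>-I. if i \<in> I then a i else b i)"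
    by (rule sum_split_UNIV)
  also have "\<dots> = sum a I + sum b (- I)"
    by (intro arg_cong2[where f="(+)"] sum.cong) auto
  finally show ?thesis .
qed

lemma contact_dphi:
  assumes "fst (snd v) = snd (snd w) \<bullet> fst v"
  shows "fst (snd (dphi I w v)) = snd (snd (phiI I w)) \<bullet> fst (dphi I w v)"
proof -
  obtain x u p where w: "w = (x,u,p)" by (cases w) auto
  obtain dx du dp where v: "v = (dx,du,dp)" by (cases v) auto
  have du: "du = (\<Sum>i\<in>I. p$i * dx$i) + (\<Sum>i\<in>-I. p$i * dx$i)"
    using assms by (simp add: w v inner_vec_def sum_split_UNIV[of _ I])
  have "snd (snd (phiI I w)) \<bullet> fst (dphi I w v) = (\<Sum>i\<in>UNIV. if i \<in> I then - x$i * dp$i else p$i * dx$i)"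
    by (simp add: w v phiI_def dphi_def inner_vec_def if_distrib if_distribR cong: if_cong)
  also have "\<dots> = (\<Sum>i\<in>I. - x$i * dp$i) + (\<Sum>i\<in>-I. p$i * dx$i)" by (rule sum_if_UNIV)
  finally show ?thesis
    by (simp add: w v dphi_def du sum.distrib sum_negf algebra_simps)
qed

lemma lct_phi: "local_contact_transformation (phiI I) UNIV"
proof -
  have img: "phiI I ` UNIV = UNIV"
    by (metis phi_psi surjI)
  have "\<exists>\<psi>. smooth_on UNIV \<psi> \<and> (\<forall>w\<in>UNIV. \<psi> (phiI I w) = w) \<and> (\<forall>z\<in>UNIV. phiI I (\<psi> z) = z)"
    using smooth_psi psi_phi phi_psi by blast
  then show ?thesis unfolding local_contact_transformation_def img
    using smooth_phi
    by (auto simp: contact_plane_iff fd_phi intro!: contact_dphi)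
qed

definition MF :: "'n::finite set \<Rightarrow> real^'n^'n \<Rightarrow> real^'n^'n" where
  "MF I U = (\<chi> i j. if i \<in> I then U$i$j else (if i = j then 1 else 0))"
definition MG :: "'n::finite set \<Rightarrow> real^'n^'n \<Rightarrow> real^'n^'n" where
  "MG I U = (\<chi> i j. if i \<in> I then (if i = j then -1 else 0) else U$i$j)"

lemma MF_mult: "MF I U *v dx = sel I (U *v dx) dx"
proof -
  have "(MF I U *v dx) $ i = sel I (U *v dx) dx $ i" for i
  proof (cases "i \<in> I")
    case True then show ?thesis by (simp add: MF_def matrix_vector_mult_def)
  next
    case False
    have "(\<Sum>j\<in>UNIV. (if i = j then 1 else 0) * dx $ j) = (\<Sum>j\<in>UNIV. if i = j then dx $ j else 0)"
      by (rule sum.cong) auto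
    then have "(\<Sum>j\<in>UNIV. (if i = j then 1 else 0) * dx $ j) = dx $ i" by simp
    then show ?thesis using False by (simp add: MF_def matrix_vector_mult_def)
  qed
  then show ?thesis by (simp add: vec_eq_iff)
qed
lemma MG_mult: "MG I U *v dx = sel I (- dx) (U *v dx)"
proof -
  have "(MG I U *v dx) $ i = sel I (- dx) (U *v dx) $ i" for i
  proof (cases "i \<in> I")
    case False then show ?thesis by (simp add: MG_def matrix_vector_mult_def)
  next
    case True
    have "(\<Sum>j\<in>UNIV. (if i = j then -1 else 0) * dx $ j) = (\<Sum>j\<in>UNIV. if i = j then - dx $ j else 0)"
      by (rule sum.cong) auto
    then have "(\<Sum>j\<in>UNIV. (if i = j then -1 else 0) * dx $ j) = - dx $ i" by simp
    then show ?thesis using True by (simp add: MG_def matrix_vector_mult_def)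
  qed
  then show ?thesis by (simp add: vec_eq_iff)
qed

lemma MFG_sym:
  assumes sym: "transpose U = U"
  shows "transpose (MF I U) ** MG I U = transpose (MG I U) ** MF I U"
proof -
  have s: "U$a$b = U$b$a" for a b using sym by (metis transpose_def vec_lambda_beta)
  have e1: "(\<Sum>i\<in>UNIV. MF I U $ i $ a * MG I U $ i $ b) =
      (if b \<in> I then - U$b$a else 0) + (if a \<notin> I then U$a$b else 0)" for a b
  proof -
    have "(\<Sum>i\<in>UNIV. MF I U $ i $ a * MG I U $ i $ b) =
       (\<Sum>i\<in>UNIV. (if i = b then (if b \<in> I then - U$b$a else 0) else 0) + (if i = a then (if a \<notin> I then U$a$b else 0) else 0))"
      by (rule sum.cong) (auto simp: MF_def MG_def)
    then show ?thesis by (simp add: sum.distrib)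
  qed
  have e2: "(\<Sum>i\<in>UNIV. MG I U $ i $ a * MF I U $ i $ b) =
      (if a \<in> I then - U$a$b else 0) + (if b \<notin> I then U$b$a else 0)" for a b
    using e1[of b a] by (simp add: mult.commute)
  have "(transpose (MF I U) ** MG I U) $ a $ b = (transpose (MG I U) ** MF I U) $ a $ b" for a b
  proof -
    have l: "(transpose (MF I U) ** MG I U) $ a $ b = (\<Sum>i\<in>UNIV. MF I U $ i $ a * MG I U $ i $ b)"
      by (simp add: matrix_matrix_mult_def transpose_def)
    have r: "(transpose (MG I U) ** MF I U) $ a $ b = (\<Sum>i\<in>UNIV. MG I U $ i $ a * MF I U $ i $ b)"
      by (simp add: matrix_matrix_mult_def transpose_def)
    show ?thesis unfolding l r e1 e2 using s[of a b]
      by (cases "a \<in> I"; cases "b \<in> I") simp_all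
  qed
  then show ?thesis by (simp add: vec_eq_iff)
qed

lemma dphi_lagr: "dphi I (x,u,p) (dx, p \<bullet> dx, U *v dx) = (MF I U *v dx, snd (snd (phiI I (x,u,p))) \<bullet> (MF I U *v dx), MG I U *v dx)"
proof -
  have "fst (snd (dphi I (x,u,p) (dx, p \<bullet> dx, U *v dx))) = snd (snd (phiI I (x,u,p))) \<bullet> fst (dphi I (x,u,p) (dx, p \<bullet> dx, U *v dx))"
    by (rule contact_dphi) simp
  then show ?thesis by (simp add: dphi_def MF_mult MG_mult)
qed

lemma prolong_exists:
  assumes sym: "transpose U = U" and det: "det (MF I U) \<noteq> 0"
  shows "\<exists>U'. transpose U' = U' \<and> dphi I (x,u,p) ` lagr_plane p U = lagr_plane (snd (snd (phiI I (x,u,p)))) U'"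
proof -
  obtain B where B1: "MF I U ** B = mat 1" and B2: "B ** MF I U = mat 1"
    using det invertible_det_nz invertible_def by blast
  define U' where "U' = MG I U ** B"
  have "transpose U' = transpose B ** transpose (MG I U)"
    by (simp add: U'_def matrix_transpose_mul)
  also have "\<dots> = transpose B ** transpose (MG I U) ** (MF I U ** B)"
    by (simp add: B1)
  also have "\<dots> = transpose B ** (transpose (MG I U) ** MF I U) ** B"
    by (simp add: matrix_mul_assoc)
  also have "\<dots> = transpose B ** (transpose (MF I U) ** MG I U) ** B"
    by (simp add: MFG_sym[OF sym])
  also have "\<dots> = transpose (MF I U ** B) ** MG I U ** B"
    by (simp add: matrix_mul_assoc matrix_transpose_mul)
  also have "\<dots> = U'" by (simp add: B1 U'_def transpose_mat matrix_mul_assoc)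
  finally have symU': "transpose U' = U'" .
  let ?P = "snd (snd (phiI I (x,u,p)))"
  have "dphi I (x,u,p) ` lagr_plane p U = lagr_plane ?P U'"
  proof
    show "dphi I (x,u,p) ` lagr_plane p U \<subseteq> lagr_plane ?P U'"
    proof
      fix z assume "z \<in> dphi I (x,u,p) ` lagr_plane p U"
      then obtain dx where z: "z = dphi I (x,u,p) (dx, p \<bullet> dx, U *v dx)"
        by (auto simp: lagr_plane_def)
      have "U' *v (MF I U *v dx) = MG I U *v dx"
        by (simp add: U'_def matrix_vector_mul_assoc B2 flip: matrix_mul_assoc)
      then show "z \<in> lagr_plane ?P U'" unfolding z dphi_lagr lagr_plane_def
        by (metis (mono_tags, lifting) mem_Collect_eq)
    qed
  next
    show "lagr_plane ?P U' \<subseteq> dphi I (x,u,p) ` lagr_plane p U"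
    proof
      fix z assume "z \<in> lagr_plane ?P U'"
      then obtain dX where z: "z = (dX, ?P \<bullet> dX, U' *v dX)" by (auto simp: lagr_plane_def)
      define dx where "dx = B *v dX"
      have m: "MF I U *v dx = dX" by (simp add: dx_def matrix_vector_mul_assoc B1)
      have m2: "MG I U *v dx = U' *v dX" by (simp add: dx_def U'_def matrix_vector_mul_assoc)
      have "z = dphi I (x,u,p) (dx, p \<bullet> dx, U *v dx)"
        unfolding dphi_lagr z m m2 ..
      moreover have "(dx, p \<bullet> dx, U *v dx) \<in> lagr_plane p U" by (auto simp: lagr_plane_def)
      ultimately show "z \<in> dphi I (x,u,p) ` lagr_plane p U" by blast
    qed
  qed
  then show ?thesis using symU' by blast
qed

definition sing :: "'n::finite set \<Rightarrow> real^'n^'n \<Rightarrow> bool" where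
  "sing K M \<longleftrightarrow> (\<exists>v. v \<noteq> 0 \<and> (\<forall>i. i \<notin> K \<longrightarrow> v$i = 0) \<and> (\<forall>i\<in>K. (M *v v)$i = 0))"

lemma dphi_fst: "fst (dphi I w (v, a, U *v v)) = sel I (U *v v) v"
  by (simp add: dphi_def)
lemma dphi_trd: "snd (snd (dphi I w (v, a, U *v v))) = sel I (- v) (U *v v)"
  by (simp add: dphi_def)

lemma sing_transfer:
  assumes img: "dphi I (x,u,p) ` lagr_plane p U = lagr_plane P U2"
    and L: "\<And>i. (i \<in> L) = ((i \<in> K) \<noteq> (i \<in> I))"
  shows "sing K U \<longleftrightarrow> sing L U2"
proof
  assume "sing K U"
  then obtain v where v0: "v \<noteq> 0" and vK: "\<And>i. i \<notin> K \<Longrightarrow> v$i = 0" and vU: "\<And>i. i \<in> K \<Longrightarrow> (U *v v)$i = 0"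
    unfolding sing_def by blast
  let ?z = "dphi I (x,u,p) (v, p \<bullet> v, U *v v)"
  have "(v, p \<bullet> v, U *v v) \<in> lagr_plane p U" by (auto simp: lagr_plane_def)
  then have "?z \<in> lagr_plane P U2" using img by blast
  then obtain dX where z: "?z = (dX, P \<bullet> dX, U2 *v dX)" by (auto simp: lagr_plane_def)
  have X: "dX = sel I (U *v v) v" using z dphi_fst[of I "(x,u,p)" v "p \<bullet> v" U] by simp
  have Y: "U2 *v dX = sel I (- v) (U *v v)" using z dphi_trd[of I "(x,u,p)" v "p \<bullet> v" U] by simp
  have "dX \<noteq> 0"
  proof
    assume d0: "dX = 0"
    have "v $ i = 0" for i
    proof (cases "i \<in> I")
      case True
      have "(U2 *v dX) $ i = 0" using d0 by simp
      then show ?thesis using Y True by simp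
    next
      case False
      then show ?thesis using X d0 by (metis sel_nth zero_index)
    qed
    then show False using v0 by (simp add: vec_eq_iff)
  qed
  moreover have "dX $ i = 0" if "i \<notin> L" for i
    using that L[of i] X vK vU by (cases "i \<in> I") auto
  moreover have "(U2 *v dX) $ i = 0" if "i \<in> L" for i
    using that L[of i] Y vK vU by (cases "i \<in> I") auto
  ultimately show "sing L U2" unfolding sing_def by blast
next
  assume "sing L U2"
  then obtain w where w0: "w \<noteq> 0" and wL: "\<And>i. i \<notin> L \<Longrightarrow> w$i = 0" and wU: "\<And>i. i \<in> L \<Longrightarrow> (U2 *v w)$i = 0"
    unfolding sing_def by blast
  have "(w, P \<bullet> w, U2 *v w) \<in> lagr_plane P U2" by (auto simp: lagr_plane_def)
  then have "(w, P \<bullet> w, U2 *v w) \<in> dphi I (x,u,p) ` lagr_plane p U" using img by blast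
  then obtain dx where z: "(w, P \<bullet> w, U2 *v w) = dphi I (x,u,p) (dx, p \<bullet> dx, U *v dx)"
    by (auto simp: lagr_plane_def)
  have X: "w = sel I (U *v dx) dx" using z dphi_fst[of I "(x,u,p)" dx "p \<bullet> dx" U]
    by (metis fst_conv)
  have Y: "U2 *v w = sel I (- dx) (U *v dx)" using z dphi_trd[of I "(x,u,p)" dx "p \<bullet> dx" U]
    by (metis snd_conv)
  have "dx \<noteq> 0"
  proof
    assume d: "dx = 0"
    have "w = 0" unfolding X d by (simp add: vec_eq_iff)
    then show False using w0 by simp
  qed
  moreover have "dx $ i = 0" if "i \<notin> K" for i
  proof (cases "i \<in> I")
    case True then have "i \<in> L" using L[of i] that by simp
    then have "(U2 *v w)$i = 0" by (rule wU)
    then show ?thesis using Y True by simp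
  next
    case False then have "i \<notin> L" using L[of i] that by simp
    then have "w$i = 0" by (rule wL)
    then show ?thesis using X False by simp
  qed
  moreover have "(U *v dx) $ i = 0" if "i \<in> K" for i
  proof (cases "i \<in> I")
    case True then have "i \<notin> L" using L[of i] that by simp
    then have "w$i = 0" by (rule wL)
    then show ?thesis using X True by simp
  next
    case False then have "i \<in> L" using L[of i] that by simp
    then have "(U2 *v w)$i = 0" by (rule wU)
    then show ?thesis using Y False by simp
  qed
  ultimately show "sing K U" unfolding sing_def by blast
qed

definition ext :: "'n::finite set \<Rightarrow> real^'n^'n \<Rightarrow> real^'n^'n" where
  "ext K U = (\<chi> i j. if i \<in> K \<and> j \<in> K then U$i$j else if i = j then 1 else 0)"

lemma det_ext: fixes K :: "'n::finite set" shows "det (ext K U) = (\<Sum>\<pi> | \<pi> permutes K. of_int (sign \<pi>) * (\<Prod>i\<in>K. U $ i $ \<pi> i))"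
proof -
  have "(\<Sum>\<pi> | \<pi> permutes K. of_int (sign \<pi>) * (\<Prod>i\<in>K. U $ i $ \<pi> i)) =
        (\<Sum>\<pi> | \<pi> permutes UNIV. of_int (sign \<pi>) * (\<Prod>i\<in>UNIV. ext K U $ i $ \<pi> i))"
  proof (rule sum.mono_neutral_cong_left)
    show "finite {\<pi>. \<pi> permutes (UNIV::'n set)}" by (rule finite_permutations) simp
    show "{\<pi>. \<pi> permutes K} \<subseteq> {\<pi>. \<pi> permutes (UNIV::'n set)}"
      using permutes_subset by blast
  next
    show "\<forall>\<pi>\<in>{\<pi>. \<pi> permutes (UNIV::'n set)} - {\<pi>. \<pi> permutes K}. of_int (sign \<pi>) * (\<Prod>i\<in>UNIV. ext K U $ i $ \<pi> i) = 0"
    proof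
    fix \<pi> assume "\<pi> \<in> {\<pi>. \<pi> permutes (UNIV::'n set)} - {\<pi>. \<pi> permutes K}"
    then have pU: "\<pi> permutes UNIV" and npK: "\<not> \<pi> permutes K" by auto
    have "\<exists>i. i \<notin> K \<and> \<pi> i \<noteq> i"
      using pU npK unfolding permutes_def by blast
    then obtain i where "i \<notin> K" "\<pi> i \<noteq> i" by blast
    then have "ext K U $ i $ \<pi> i = 0" by (simp add: ext_def)
    then have "(\<Prod>i\<in>UNIV. ext K U $ i $ \<pi> i) = 0"
      by (meson UNIV_I finite prod_zero_iff)
    then show "of_int (sign \<pi>) * (\<Prod>i\<in>UNIV. ext K U $ i $ \<pi> i) = 0" by simp
    qed
  next
    fix \<pi> assume "\<pi> \<in> {\<pi>. \<pi> permutes K}"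
    then have pK: "\<pi> permutes K" by simp
    have "(\<Prod>i\<in>UNIV. ext K U $ i $ \<pi> i) = (\<Prod>i\<in>K \<union> -K. ext K U $ i $ \<pi> i)" by simp
    also have "\<dots> = (\<Prod>i\<in>K. ext K U $ i $ \<pi> i) * (\<Prod>i\<in>-K. ext K U $ i $ \<pi> i)"
      by (rule prod.union_disjoint) auto
    also have "(\<Prod>i\<in>-K. ext K U $ i $ \<pi> i) = 1"
      using pK by (intro prod.neutral) (auto simp: ext_def permutes_not_in)
    also have "(\<Prod>i\<in>K. ext K U $ i $ \<pi> i) = (\<Prod>i\<in>K. U $ i $ \<pi> i)"
      using pK by (intro prod.cong) (auto simp: ext_def permutes_in_image)
    finally show "of_int (sign \<pi>) * (\<Prod>i\<in>K. U $ i $ \<pi> i) = of_int (sign \<pi>) * (\<Prod>i\<in>UNIV. ext K U $ i $ \<pi> i)"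
      by simp
  qed
  then show ?thesis by (simp add: det_def)
qed

lemma det_zero_iff: "det (A::real^'n^'n) = 0 \<longleftrightarrow> (\<exists>v. v \<noteq> 0 \<and> A *v v = 0)"
  using det_eq_0_rank less_rank_noninjective vec.inj_iff_eq_0 by blast

lemma ext_mult: "(ext K U *v v) $ i = (if i \<in> K then (\<Sum>j\<in>UNIV. if j \<in> K then U$i$j * v$j else 0) else v $ i)"
proof (cases "i \<in> K")
  case True
  have "(\<Sum>j\<in>UNIV. ext K U $ i $ j * v $ j) = (\<Sum>j\<in>UNIV. if j \<in> K then U$i$j * v$j else 0)"
    by (rule sum.cong) (auto simp: ext_def True)
  then show ?thesis using True by (simp add: matrix_vector_mult_def)
next
  case False
  have "(\<Sum>j\<in>UNIV. ext K U $ i $ j * v $ j) = (\<Sum>j\<in>UNIV. if i = j then v $ j else 0)"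
    by (rule sum.cong) (auto simp: ext_def False)
  then show ?thesis using False by (simp add: matrix_vector_mult_def)
qed

lemma ext_kernel: "ext K U *v v = 0 \<longleftrightarrow> (\<forall>i. i \<notin> K \<longrightarrow> v$i = 0) \<and> (\<forall>i\<in>K. (U *v v)$i = 0)"
proof -
  have eq: "(\<Sum>j\<in>UNIV. if j \<in> K then U$i$j * v$j else 0) = (U *v v) $ i"
    if "\<forall>i. i \<notin> K \<longrightarrow> v$i = 0" for i
    unfolding matrix_vector_mult_def using that by (auto intro: sum.cong)
  show ?thesis
  proof
    assume h: "ext K U *v v = 0"
    have z: "\<forall>i. i \<notin> K \<longrightarrow> v$i = 0"
      using h ext_mult[of K U v] by (metis zero_index)
    moreover have "\<forall>i\<in>K. (U *v v)$i = 0"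
      using h ext_mult[of K U v] eq[OF z] by (metis zero_index)
    ultimately show "(\<forall>i. i \<notin> K \<longrightarrow> v$i = 0) \<and> (\<forall>i\<in>K. (U *v v)$i = 0)" by blast
  next
    assume h: "(\<forall>i. i \<notin> K \<longrightarrow> v$i = 0) \<and> (\<forall>i\<in>K. (U *v v)$i = 0)"
    show "ext K U *v v = 0"
      unfolding vec_eq_iff using h ext_mult[of K U v] eq by auto
  qed
qed

lemma det_lead_sing: "det_lead k U = 0 \<longleftrightarrow> sing (lead k) U"
  unfolding det_lead_def det_ext[symmetric] det_zero_iff ext_kernel sing_def by blast

lemma continuous_on_if_const:
  "continuous_on S f \<Longrightarrow> continuous_on S g \<Longrightarrow> continuous_on S (\<lambda>x. if P then f x else g x)"
  by (cases P) auto

lemma open_D: "open {a :: 'n::finite jet2. det (MF I (snd a)) \<noteq> 0}"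
proof -
  have "continuous_on UNIV (\<lambda>a::'n jet2. det (MF I (snd a)))"
    unfolding det_def MF_def
    by (auto intro!: continuous_intros continuous_on_if_const)
  then show ?thesis by (intro open_Collect_neq continuous_on_const)
qed

lemma least_in_lead:
  assumes "1 \<le> m" shows "(LEAST i::'n::{finite,wellorder}. True) \<in> lead m"
proof -
  have "{j::'n. j < (LEAST i. True)} = {}" by (auto dest: not_less_Least)
  then show ?thesis using assms by (simp add: lead_def)
qed

theorem corollary9p3:
  fixes k l :: nat
  assumes "1 \<le> k" "k \<le> CARD('n::{finite,wellorder})"
      and "1 \<le> l" "l \<le> CARD('n)"
  shows "\<exists>(\<phi> :: 'n jet1 \<Rightarrow> 'n jet1) W D.
           local_contact_transformation \<phi> W \<and>
           openin (top_of_set J2) D \<and> D \<subseteq> J2 \<and> D \<subseteq> W \<times> UNIV \<and>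
           (\<forall>a\<in>D. \<exists>b. prolongs \<phi> a b) \<and>
           (\<exists>a\<in>D. det_lead k (snd a) = 0) \<and>
           (\<forall>a\<in>D. \<forall>b. prolongs \<phi> a b \<longrightarrow>
               (det_lead k (snd a) = 0 \<longleftrightarrow> det_lead l (snd b) = 0))"
proof -
  define K :: "'n set" where "K = lead k"
  define L :: "'n set" where "L = lead l"
  define I where "I = (K - L) \<union> (L - K)"
  have LKI: "\<And>i. (i \<in> L) = ((i \<in> K) \<noteq> (i \<in> I))" by (auto simp: I_def)
  define D :: "'n jet2 set" where "D = J2 \<inter> {a. det (MF I (snd a)) \<noteq> 0}"
  have lct: "local_contact_transformation (phiI I) UNIV" by (rule lct_phi)
  have op: "openin (top_of_set J2) D" unfolding D_def using open_D by blast
  have sub: "D \<subseteq> J2" "D \<subseteq> UNIV \<times> UNIV" by (auto simp: D_def)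
  have pro: "\<exists>b. prolongs (phiI I) a b" if "a \<in> D" for a
  proof -
    obtain x u p U where a: "a = ((x,u,p),U)" by (metis prod.exhaust)
    have sym: "transpose U = U" and dt: "det (MF I U) \<noteq> 0" using that by (auto simp: D_def J2_def a)
    obtain U' where U': "transpose U' = U'"
      "dphi I (x,u,p) ` lagr_plane p U = lagr_plane (snd (snd (phiI I (x,u,p)))) U'"
      using prolong_exists[OF sym dt] by blast
    obtain x' u' p' where ph: "phiI I (x,u,p) = (x',u',p')" by (metis prod.exhaust)
    have "prolongs (phiI I) a ((x',u',p'),U')"
      using U' ph by (simp add: prolongs_def a fd_phi)
    then show ?thesis by blast
  qed
  have ex: "\<exists>a\<in>D. det_lead k (snd a) = 0"
  proof -
    define i0 :: 'n where "i0 = (LEAST i. True)"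
    have i0K: "i0 \<in> K" unfolding K_def i0_def by (rule least_in_lead[OF assms(1)])
    have i0L: "i0 \<in> L" unfolding L_def i0_def by (rule least_in_lead[OF assms(3)])
    have i0I: "i0 \<notin> I" using i0K i0L by (simp add: I_def)
    define U0 where "U0 = (\<chi> i j. if i = j \<and> i \<noteq> i0 then 1 else (0::real))"
    have symU0: "transpose U0 = U0" by (auto simp: U0_def transpose_def vec_eq_iff)
    have "MF I U0 = mat 1" using i0I by (auto simp: MF_def U0_def mat_def vec_eq_iff)
    then have dU0: "det (MF I U0) \<noteq> 0" by simp
    have "U0 *v axis i0 1 = 0"
      unfolding vec_eq_iff matrix_vector_mult_def by (auto intro!: sum.neutral simp: U0_def axis_def)
    moreover have "axis i0 (1::real) \<noteq> 0" by (simp add: axis_eq_0_iff)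
    ultimately have "sing K U0" using i0K
      unfolding sing_def by (auto intro!: exI[of _ "axis i0 1"] simp: axis_def)
    then have "det_lead k U0 = 0" by (simp add: det_lead_sing K_def)
    moreover have "((0,0,0),U0) \<in> D" using symU0 dU0 by (simp add: D_def J2_def)
    ultimately show ?thesis by force
  qed
  have main: "det_lead k (snd a) = 0 \<longleftrightarrow> det_lead l (snd b) = 0"
    if "a \<in> D" "prolongs (phiI I) a b" for a b
  proof -
    obtain x u p U where a: "a = ((x,u,p),U)" by (metis prod.exhaust)
    obtain x' u' p' U2 where b: "b = ((x',u',p'),U2)" by (metis prod.exhaust)
    have img: "dphi I (x,u,p) ` lagr_plane p U = lagr_plane p' U2"
      using that(2) by (simp add: prolongs_def a b fd_phi)
    have "sing K U \<longleftrightarrow> sing L U2" by (rule sing_transfer[OF img LKI])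
    then show ?thesis by (simp add: a b det_lead_sing K_def L_def)
  qed
  show ?thesis
    apply (rule exI[of _ "phiI I"], rule exI[of _ UNIV], rule exI[of _ D])
    using lct op sub pro ex main by blast
qed

end
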